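(* Let $\lambda_*\in\mathbb C\setminus\{a_1,\dots,a_n\}$. If $(X,P),(\tilde X,\tilde P)\in T^*V_{n,r}$ and a symmetric $r\times r$ matrix $\Gamma=\Gamma(\lambda_* )$ satisfy the discrete Neumann equations $$P=A^{1/2}(\lambda_* )\tilde X-X\Gamma,\qquad \tilde P=-A^{1/2}(\lambda_* )X+\tilde X\Gamma,\qquad \Gamma=\tfrac12\big(\tilde X^TA^{1/2}(\lambda_* )X+X^TA^{1/2}(\lambda_* )\tilde X\big),$$ then for all $\lambda$ the intertwining relation $$\tilde L(\lambda)M(\lambda,\lambda_* )=M(\lambda,\lambda_* )L(\lambda),\qquad M(\lambda,\lambda_* )=\begin{pmatrix}-\Gamma&\mathbf I_r\\ (\lambda-\lambda_* )\mathbf I_r+\Gamma^2&-\Gamma\end{pmatrix}$$ holds. Conversely, up to the action of the group $\mathbb Z_2^n$ of reflections, the intertwining relation implies the discrete Neumann equations: if $(X,P),(\tilde X,\tilde P)\in T^*V_{n,r}$ and a symmetric $\Gamma$ satisfy the intertwining relation for all $\lambda$, then, after applying a suitable element of $\mathbb Z_2^n$ to $(\tilde X,\tilde P)$, the discrete Neumann equations hold.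
   Context: $A=\mathrm{diag}(a_1,\dots,a_n)$ with distinct $a_i$, $A(\lambda)=\lambda\mathbf I_n-A$, and $A^{1/2}(\lambda_* )=\mathrm{diag}(\sqrt{\lambda_*-a_1},\dots,\sqrt{\lambda_*-a_n})$ for a fixed choice of square roots. $T^*V_{n,r}$ is the set of pairs of $n\times r$ matrices $(X,P)$ with $X^TX=\mathbf I_r$, $X^TP+P^TX=0$. $L(\lambda)=\begin{pmatrix} X^TA(\lambda)^{-1}P & X^TA(\lambda)^{-1}X\\ \mathbf I_r-P^TA(\lambda)^{-1}P & -P^TA(\lambda)^{-1}X\end{pmatrix}$ and $\tilde L(\lambda)$ is the same expression in $(\tilde X,\tilde P)$. The group $\mathbb Z_2^n$ acts by changing the sign of the $i$-th row of both matrices of a pair simultaneously, $i=1,\dots,n$. *)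

theory Defs
  imports "HOL-Analysis.Analysis"
begin

definition diagm :: "('n::finite \<Rightarrow> complex) \<Rightarrow> complex^'n^'n" where
  "diagm d = (\<chi> i j. if i = j then d i else 0)"

definition Amat :: "('n::finite \<Rightarrow> complex) \<Rightarrow> complex \<Rightarrow> complex^'n^'n" where
  "Amat a lam = mat lam - diagm a"

text \<open>2r x 2r block matrix (B11 B12; B21 B22), indices Inl = first block, Inr = second.\<close>
definition blk :: "complex^'r^'r \<Rightarrow> complex^'r^'r \<Rightarrow> complex^'r^'r \<Rightarrow> complex^'r^'r
    \<Rightarrow> complex^('r + 'r)^('r + 'r)" where
  "blk B11 B12 B21 B22 = (\<chi> i j. case i of
      Inl i' \<Rightarrow> (case j of Inl j' \<Rightarrow> B11 $ i' $ j' | Inr j' \<Rightarrow> B12 $ i' $ j')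
    | Inr i' \<Rightarrow> (case j of Inl j' \<Rightarrow> B21 $ i' $ j' | Inr j' \<Rightarrow> B22 $ i' $ j'))"

definition in_TVnr :: "complex^'r^'n \<Rightarrow> complex^'r^'n \<Rightarrow> bool" where
  "in_TVnr X P \<longleftrightarrow> transpose X ** X = mat 1 \<and> transpose X ** P + transpose P ** X = 0"

definition Lax :: "('n::finite \<Rightarrow> complex) \<Rightarrow> complex^'r^'n \<Rightarrow> complex^'r^'n \<Rightarrow> complex
    \<Rightarrow> complex^('r::finite + 'r)^('r + 'r)" where
  "Lax a X P lam = (let R = matrix_inv (Amat a lam) in
     blk (transpose X ** R ** P) (transpose X ** R ** X)
         (mat 1 - transpose P ** R ** P) (- (transpose P ** R ** X)))"

definition Mmat :: "complex^'r^'r \<Rightarrow> complex \<Rightarrow> complex \<Rightarrow> complex^('r::finite + 'r)^('r + 'r)" where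
  "Mmat \<Gamma> lam lams = blk (- \<Gamma>) (mat 1) (mat (lam - lams) + \<Gamma> ** \<Gamma>) (- \<Gamma>)"

text \<open>Discrete Neumann equations, with A^{1/2}(lambda_*) = diagm s.\<close>
definition neumann :: "('n::finite \<Rightarrow> complex) \<Rightarrow> complex^'r^'n \<Rightarrow> complex^'r^'n
    \<Rightarrow> complex^'r^'n \<Rightarrow> complex^'r^'n \<Rightarrow> complex^'r^'r \<Rightarrow> bool" where
  "neumann s X P Xt Pt \<Gamma> \<longleftrightarrow>
     P = diagm s ** Xt - X ** \<Gamma> \<and>
     Pt = - (diagm s ** X) + Xt ** \<Gamma> \<and>
     \<Gamma> = mat (1/2 :: complex) ** (transpose Xt ** diagm s ** X + transpose X ** diagm s ** Xt)"

end

theory Submission imports Defs begin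

lemma residue_scalar:
  fixes a :: "'n::finite \<Rightarrow> complex" and f :: "'n \<Rightarrow> complex \<Rightarrow> complex"
  assumes inj: "inj a" and cf: "\<And>i x. isCont (f i) x" and cg: "\<And>x. isCont g x"
    and eq: "\<And>z. z \<notin> range a \<Longrightarrow> (\<Sum>i\<in>UNIV. f i z / (z - a i)) + g z = 0"
  shows "f j (a j) = 0"
proof -
  define h where "h z = f j z + (\<Sum>i\<in>UNIV-{j}. (z - a j) * f i z / (z - a i)) + (z - a j) * g z" for z
  have ne: "a j - a i \<noteq> 0" if "i \<in> UNIV - {j}" for i
    using that inj by (auto dest: injD)
  have "isCont h (a j)"
    unfolding h_def
    by (intro continuous_intros cf cg) (use ne in auto)
  then have l1: "(h \<longlongrightarrow> h (a j)) (at (a j))" by (simp add: isCont_def)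
  have ev: "eventually (\<lambda>z. z \<notin> range a) (at (a j))"
  proof -
    have o: "open (- (range a - {a j}))" by (intro open_Compl finite_imp_closed) auto
    show ?thesis unfolding eventually_at_topological
      by (rule exI[of _ "- (range a - {a j})"]) (use o in auto)
  qed
  have "eventually (\<lambda>z. h z = 0) (at (a j))"
    using ev eventually_at[of _ "a j"]
  proof -
    have "eventually (\<lambda>z. z \<notin> range a \<and> z \<noteq> a j) (at (a j))"
      using ev by (simp add: eventually_at_filter eventually_mono)
    then show ?thesis
    proof (rule eventually_mono)
      fix z assume z: "z \<notin> range a \<and> z \<noteq> a j"
      have "(z - a j) * ((\<Sum>i\<in>UNIV. f i z / (z - a i)) + g z) = 0" using eq z by simp
      moreover have "(\<Sum>i\<in>UNIV. f i z / (z - a i)) = f j z / (z - a j) + (\<Sum>i\<in>UNIV-{j}. f i z / (z - a i))"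
        by (simp add: sum.remove)
      moreover have "(z - a j) * (f j z / (z - a j)) = f j z" using z by simp
      moreover have "(z - a j) * (\<Sum>i\<in>UNIV-{j}. f i z / (z - a i)) = (\<Sum>i\<in>UNIV-{j}. (z - a j) * f i z / (z - a i))"
        by (simp add: sum_distrib_left)
      ultimately show "h z = 0" unfolding h_def
        by (metis distrib_left)
    qed
  qed
  then have l2: "(h \<longlongrightarrow> 0) (at (a j))" by (rule tendsto_eventually)
  have "h (a j) = 0" using tendsto_unique[OF _ l1 l2] by simp
  then show ?thesis by (simp add: h_def)
qed

definition sm :: "complex \<Rightarrow> complex^'a^'b \<Rightarrow> complex^'a^'b" where
  "sm c M = (\<chi> i j. c * M$i$j)"

definition outer :: "complex^'a \<Rightarrow> complex^'b \<Rightarrow> complex^'b^'a" where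
  "outer u v = (\<chi> k l. u$k * v$l)"

definition NN :: "complex^'r^'n \<Rightarrow> complex^'r^'n \<Rightarrow> 'n \<Rightarrow> complex^('r::finite + 'r)^('r + 'r)" where
  "NN X P i = blk (outer (X$i) (P$i)) (outer (X$i) (X$i)) (- outer (P$i) (P$i)) (- outer (P$i) (X$i))"

definition JJ :: "complex^('r::finite + 'r)^('r + 'r)" where
  "JJ = blk 0 0 (mat 1) 0"

lemma blk_nth [simp]:
  "blk A B C D $ Inl i $ Inl j = A$i$j"
  "blk A B C D $ Inl i $ Inr j = B$i$j"
  "blk A B C D $ Inr i $ Inl j = C$i$j"
  "blk A B C D $ Inr i $ Inr j = D$i$j"
  by (simp_all add: blk_def)

lemma sum_Plus_UNIV: "(\<Sum>k\<in>(UNIV::('a::finite + 'b::finite) set). f k) = (\<Sum>k\<in>UNIV. f (Inl k)) + (\<Sum>k\<in>UNIV. f (Inr k))"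
  by (subst UNIV_Plus_UNIV[symmetric], subst sum.Plus) auto

lemma blk_mult:
  "blk A B C D ** blk E F G H = blk (A**E + B**G) (A**F+B**H) (C**E+D**G) (C**F+D**H)"
proof -
  have "(blk A B C D ** blk E F G H) $ x $ y = blk (A**E + B**G) (A**F+B**H) (C**E+D**G) (C**F+D**H) $ x $ y" for x y
    by (cases x; cases y) (simp_all add: matrix_matrix_mult_def sum_Plus_UNIV)
  then show ?thesis by (simp add: vec_eq_iff)
qed

lemma blk_diff: "blk A B C D - blk E F G H = blk (A-E) (B-F) (C-G) (D-H)"
proof -
  have "(blk A B C D - blk E F G H) $ x $ y = blk (A-E) (B-F) (C-G) (D-H) $ x $ y" for x y
    by (cases x; cases y) simp_all
  then show ?thesis by (simp add: vec_eq_iff)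
qed

lemma blk_eq: "blk A B C D = blk E F G H \<longleftrightarrow> A = E \<and> B = F \<and> C = G \<and> D = H"
proof
  assume h: "blk A B C D = blk E F G H"
  have "\<And>x y. blk A B C D $ x $ y = blk E F G H $ x $ y" using h by simp
  then have "\<And>i j. A$i$j = E$i$j \<and> B$i$j = F$i$j \<and> C$i$j = G$i$j \<and> D$i$j = H$i$j"
    by (metis blk_nth)
  then show "A = E \<and> B = F \<and> C = G \<and> D = H" by (simp add: vec_eq_iff)
qed simp

lemma diag_sum: "(\<Sum>k\<in>(UNIV::'n::finite set). (if i = k then c else 0) * f k) = (c::complex) * f i"
proof -
  have "(\<Sum>k\<in>UNIV. (if i = k then c else 0) * f k) = (\<Sum>k\<in>UNIV. if k = i then c * f k else 0)"
    by (rule sum.cong) auto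
  also have "\<dots> = c * f i" by (simp add: sum.delta')
  finally show ?thesis .
qed

lemma diagm_mult: "diagm d ** diagm e = diagm (\<lambda>i. d i * e i)"
  unfolding vec_eq_iff matrix_matrix_mult_def diagm_def
  by (auto simp: diag_sum)

lemma inv_Amat:
  assumes "lam \<notin> range a"
  shows "matrix_inv (Amat a lam) = diagm (\<lambda>i. 1 / (lam - a i))"
proof -
  have A: "Amat a lam = diagm (\<lambda>i. lam - a i)"
    by (simp add: Amat_def diagm_def mat_def vec_eq_iff)
  have ne: "lam - a i \<noteq> 0" for i using assms by auto
  let ?D = "diagm (\<lambda>i. 1 / (lam - a i))"
  have 1: "Amat a lam ** ?D = mat 1" "?D ** Amat a lam = mat 1"
    unfolding A diagm_mult using ne by (simp_all add: diagm_def mat_def)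
  then have "\<exists>B. Amat a lam ** B = mat 1 \<and> B ** Amat a lam = mat 1" by blast
  then have B: "Amat a lam ** matrix_inv (Amat a lam) = mat 1" "matrix_inv (Amat a lam) ** Amat a lam = mat 1"
    unfolding matrix_inv_def by (metis (mono_tags, lifting) someI_ex)+
  have "matrix_inv (Amat a lam) = (?D ** Amat a lam) ** matrix_inv (Amat a lam)" using 1 by simp
  also have "\<dots> = ?D" by (simp add: B(1) flip: matrix_mul_assoc)
  finally show ?thesis .
qed

lemma diag_sum2: "(\<Sum>k\<in>(UNIV::'n::finite set). f k * (if k = i then c k else 0)) = f i * (c i::complex)"
proof -
  have "(\<Sum>k\<in>UNIV. f k * (if k = i then c k else 0)) = (\<Sum>k\<in>UNIV. if k = i then f k * c k else 0)"
    by (rule sum.cong) auto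
  also have "\<dots> = f i * c i" by (simp add: sum.delta')
  finally show ?thesis .
qed

lemma td: "transpose X ** diagm d = (\<chi> k m. X$m$k * d m)"
  unfolding vec_eq_iff matrix_matrix_mult_def diagm_def transpose_def
  by (auto simp: diag_sum2)

lemma tdp: "(transpose X ** diagm d ** P) $ k $ l = (\<Sum>i\<in>UNIV. d i * (X$i$k * P$i$l))"
  unfolding td by (simp add: matrix_matrix_mult_def mult_ac)

lemma Lax_decomp:
  assumes "lam \<notin> range a"
  shows "Lax a X P lam = JJ + (\<Sum>i\<in>UNIV. sm (1/(lam - a i)) (NN X P i))"
proof -
  have "Lax a X P lam $ x $ y = (JJ + (\<Sum>i\<in>UNIV. sm (1/(lam - a i)) (NN X P i))) $ x $ y" for x y
    by (cases x; cases y) (simp_all add: Lax_def Let_def inv_Amat[OF assms] tdp JJ_def NN_def sm_def outer_def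
          mat_def sum_negf sum_subtractf)
  then show ?thesis by (simp add: vec_eq_iff)
qed


lemma add_mult_right: "(A + B) ** (C::complex^_^_) = A ** C + B ** C"
  by (simp add: vec_eq_iff matrix_matrix_mult_def sum.distrib distrib_right)

lemma mult_sum_left: "(\<Sum>i\<in>(UNIV::'i::finite set). A i) ** (B::complex^_^_) = (\<Sum>i\<in>UNIV. A i ** B)"
proof -
  have "finite S \<Longrightarrow> (\<Sum>i\<in>S. A i) ** B = (\<Sum>i\<in>S. A i ** B)" for S
    by (induct S rule: finite_induct) (simp_all add: add_mult_right)
  then show ?thesis by simp
qed

lemma mult_sum_right: "(B::complex^_^_) ** (\<Sum>i\<in>(UNIV::'i::finite set). A i) = (\<Sum>i\<in>UNIV. B ** A i)"
proof -
  have "finite S \<Longrightarrow> B ** (\<Sum>i\<in>S. A i) = (\<Sum>i\<in>S. B ** A i)" for S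
    by (induct S rule: finite_induct) (simp_all add: matrix_add_ldistrib)
  then show ?thesis by simp
qed

lemma sm_mult_left: "sm c A ** B = sm c (A ** B)"
  by (simp add: vec_eq_iff matrix_matrix_mult_def sm_def sum_distrib_left mult_ac)

lemma sm_mult_right: "A ** sm c B = sm c (A ** B)"
  by (simp add: vec_eq_iff matrix_matrix_mult_def sm_def sum_distrib_left mult_ac)

lemma sm_diff: "sm c A - sm c B = sm c (A - B)"
  by (simp add: vec_eq_iff sm_def right_diff_distrib)


lemma diff_decomp:
  fixes a :: "'n::finite \<Rightarrow> complex" and X P Xt Pt :: "complex^'r::finite^'n"
  assumes "lam \<notin> range a"
  shows "Lax a Xt Pt lam ** M - M ** Lax a X P lam
     = (\<Sum>i\<in>UNIV. sm (1/(lam - a i)) (NN Xt Pt i ** M - M ** NN X P i)) + (JJ ** M - M ** JJ)"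
proof -
  have e: "(\<Sum>i\<in>UNIV. sm (1/(lam - a i)) (U i - V i)) = (\<Sum>i\<in>UNIV. sm (1/(lam - a i)) (U i)) - (\<Sum>i\<in>UNIV. sm (1/(lam - a i)) (V i))" for U V :: "'n \<Rightarrow> complex^('r + 'r)^('r + 'r)"
    by (simp add: sm_diff[symmetric] sum_subtractf)
  show ?thesis
  unfolding Lax_decomp[OF assms] add_mult_right matrix_add_ldistrib mult_sum_left mult_sum_right
    sm_mult_left sm_mult_right e
  by (simp add: algebra_simps)
qed

definition M0 :: "complex^'r^'r \<Rightarrow> complex \<Rightarrow> complex^('r::finite + 'r)^('r + 'r)" where
  "M0 \<Gamma> lams = blk (- \<Gamma>) (mat 1) (mat (- lams) + \<Gamma> ** \<Gamma>) (- \<Gamma>)"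

lemma Mmat_entry: "Mmat \<Gamma> z lams $ p $ q = M0 \<Gamma> lams $ p $ q + z * JJ $ p $ q"
  by (cases p; cases q) (simp_all add: Mmat_def M0_def JJ_def mat_def)

lemma cont_entry: "isCont (\<lambda>z. (A ** Mmat \<Gamma> z lams - Mmat \<Gamma> z lams ** B) $ p $ q) x"
  unfolding matrix_matrix_mult_def by (simp add: Mmat_entry)

lemma resid:
  fixes a :: "'n::finite \<Rightarrow> complex"
  assumes inj: "inj a"
    and H: "\<forall>lam. lam \<notin> range a \<longrightarrow> Lax a Xt Pt lam ** Mmat \<Gamma> lam lams = Mmat \<Gamma> lam lams ** Lax a X P lam"
  shows "NN Xt Pt j ** Mmat \<Gamma> (a j) lams = Mmat \<Gamma> (a j) lams ** NN X P j"
proof -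
  have "(NN Xt Pt j ** Mmat \<Gamma> (a j) lams - Mmat \<Gamma> (a j) lams ** NN X P j) $ p $ q = 0" for p q
  proof (rule residue_scalar[OF inj, where f = "\<lambda>i z. (NN Xt Pt i ** Mmat \<Gamma> z lams - Mmat \<Gamma> z lams ** NN X P i) $ p $ q"
        and g = "\<lambda>z. (JJ ** Mmat \<Gamma> z lams - Mmat \<Gamma> z lams ** JJ) $ p $ q"])
    show "isCont (\<lambda>z. (NN Xt Pt i ** Mmat \<Gamma> z lams - Mmat \<Gamma> z lams ** NN X P i) $ p $ q) x" for i x
      by (rule cont_entry)
    show "isCont (\<lambda>z. (JJ ** Mmat \<Gamma> z lams - Mmat \<Gamma> z lams ** JJ) $ p $ q) x" for x
      by (rule cont_entry)
    fix z assume z: "z \<notin> range a"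
    have "Lax a Xt Pt z ** Mmat \<Gamma> z lams - Mmat \<Gamma> z lams ** Lax a X P z = 0" using H z by simp
    then have "((\<Sum>i\<in>UNIV. sm (1/(z - a i)) (NN Xt Pt i ** Mmat \<Gamma> z lams - Mmat \<Gamma> z lams ** NN X P i))
         + (JJ ** Mmat \<Gamma> z lams - Mmat \<Gamma> z lams ** JJ)) $ p $ q = 0"
      by (simp only: diff_decomp[OF z]) simp
    then show "(\<Sum>i\<in>UNIV. (NN Xt Pt i ** Mmat \<Gamma> z lams - Mmat \<Gamma> z lams ** NN X P i) $ p $ q / (z - a i))
         + (JJ ** Mmat \<Gamma> z lams - Mmat \<Gamma> z lams ** JJ) $ p $ q = 0"
      by (simp add: sm_def)
  qed
  then show ?thesis by (simp add: vec_eq_iff)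
qed


lemma outer_nth [simp]: "outer u v $ k $ l = u$k * v$l"
  by (simp add: outer_def)

lemma outer_mult_right: "outer u v ** B = outer u (transpose B *v v)"
  by (simp add: vec_eq_iff matrix_matrix_mult_def transpose_def matrix_vector_mult_def sum_distrib_left mult_ac)

lemma mult_outer_left: "B ** outer u v = outer (B *v u) v"
  by (simp add: vec_eq_iff matrix_matrix_mult_def matrix_vector_mult_def sum_distrib_left mult_ac)

lemma outer_sq_eq:
  fixes x y :: "complex^'r::finite"
  assumes "outer x x = outer y y"
  shows "x = y \<or> x = - y"
proof -
  have e: "x$k * x$l = y$k * y$l" for k l using arg_cong[OF assms, of "\<lambda>M. M$k$l"] by simp
  show ?thesis
  proof (cases "y = 0")
    case True
    then have "x$k * x$k = 0" for k using e[of k k] by simp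
    then show ?thesis using True by (simp add: vec_eq_iff)
  next
    case False
    then obtain j where yj: "y$j \<noteq> 0" by (auto simp: vec_eq_iff)
    from e[of j j] have "(x$j - y$j) * (x$j + y$j) = 0" by (simp add: algebra_simps)
    then have "x$j - y$j = 0 \<or> x$j + y$j = 0" by simp
    then have "x$j = y$j \<or> x$j = - y$j" by (auto simp: add_eq_0_iff2)
    then show ?thesis
    proof
      assume h: "x$j = y$j"
      have "(x$k - y$k) * y$j = 0" for k using e[of k j] h by (simp add: algebra_simps)
      then have "x$k = y$k" for k using yj by simp
      then show ?thesis by (simp add: vec_eq_iff)
    next
      assume h: "x$j = - y$j"
      have "(x$k + y$k) * y$j = 0" for k using e[of k j] h by (simp add: algebra_simps neg_eq_iff_add_eq_0)
      then have "x$k = - y$k" for k using yj by (simp add: add_eq_0_iff2)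
      then show ?thesis by (simp add: vec_eq_iff)
    qed
  qed
qed


lemma neg_mult_l: "(-A) ** (B::complex^_^_) = -(A ** B)"
  by (simp add: vec_eq_iff matrix_matrix_mult_def sum_negf)

lemma neg_mult_r: "(A::complex^_^_) ** (-B) = -(A ** B)"
  by (simp add: vec_eq_iff matrix_matrix_mult_def sum_negf)

lemma L1: "outer a b ** (G ** G) = outer a (transpose G *v (transpose G *v b))"
  by (simp add: matrix_mul_assoc outer_mult_right)

lemma L2: "(G ** G) ** outer a b = outer (G *v (G *v a)) b"
  by (simp add: matrix_mul_assoc[symmetric] mult_outer_left matrix_vector_mul_assoc)

lemma mult_mat_r: "A ** mat c = (\<chi> i j. A$i$j * (c::complex))"
  unfolding vec_eq_iff matrix_matrix_mult_def mat_def
  by (auto simp: diag_sum2[where c="\<lambda>_. c"])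

lemma mult_mat_l: "mat c ** A = (\<chi> i j. (c::complex) * A$i$j)"
  unfolding vec_eq_iff matrix_matrix_mult_def mat_def
  by (auto simp: diag_sum)

lemma L3: "outer a b ** mat c = outer a (c *s b)"
  by (simp add: mult_mat_r vec_eq_iff mult_ac)

lemma L4: "mat c ** outer a b = outer (c *s a) b"
  by (simp add: mult_mat_l vec_eq_iff mult_ac)

lemma key_l:
  assumes "\<And>m. (a::complex) * x$m = b * y$m"
  shows "a * (G *v x)$l = b * (G *v y)$l"
proof -
  have "a * (G *v x)$l = (\<Sum>m\<in>UNIV. G$l$m * (a * x$m))"
    by (simp add: matrix_vector_mult_def sum_distrib_left mult_ac)
  also have "\<dots> = (\<Sum>m\<in>UNIV. G$l$m * (b * y$m))" using assms by simp
  also have "\<dots> = b * (G *v y)$l"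
    by (simp add: matrix_vector_mult_def sum_distrib_left mult_ac)
  finally show ?thesis .
qed

lemma key_r:
  assumes "\<And>m. x$m * (a::complex) = y$m * b"
  shows "(G *v x)$l * a = (G *v y)$l * b"
  using key_l[of a x b y G l] assms by (simp add: mult_ac)

lemma outer_zero: "(\<And>k l. (x::complex^'r)$k * (y::complex^'q)$l = 0) \<Longrightarrow> x = 0 \<or> y = 0"
  by (metis mult_eq_0_iff vec_eq_iff zero_index)

lemma row_lemma:
  fixes u v ut vt :: "complex^'r::finite" and G :: "complex^'r^'r"
  assumes symG: "transpose G = G"
    and H: "blk (outer ut vt) (outer ut ut) (- outer vt vt) (- outer vt ut) ** blk (-G) (mat 1) (mat c + G**G) (-G)
          = blk (-G) (mat 1) (mat c + G**G) (-G) ** blk (outer u v) (outer u u) (- outer v v) (- outer v u)"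
    and cs: "s^2 = - c" and s0: "s \<noteq> 0"
  shows "\<exists>e. (e = 1 \<or> e = -1) \<and> G *v u + v = (e * s) *s ut \<and> vt - G *v ut = - ((e * s) *s u)"
proof -
  from H have TL: "outer ut vt ** (-G) + outer ut ut ** (mat c + G**G) = (-G) ** outer u v + mat 1 ** (- outer v v)"
    and TR: "outer ut vt ** mat 1 + outer ut ut ** (-G) = (-G) ** outer u u + mat 1 ** (- outer v u)"
    and BR: "(- outer vt vt) ** mat 1 + (- outer vt ut) ** (-G) = (mat c + G**G) ** outer u u + (-G) ** (- outer v u)"
    unfolding blk_mult blk_eq by simp_all
  from TL have TL1: "- (outer ut vt ** G) + (outer ut ut ** mat c + outer ut ut ** (G**G)) = - (G ** outer u v) + - outer v v"
    by (simp only: matrix_add_ldistrib neg_mult_l neg_mult_r matrix_mul_lid)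
  from TR have TR1: "outer ut vt + - (outer ut ut ** G) = - (G ** outer u u) + - outer v u"
    by (simp only: neg_mult_l neg_mult_r matrix_mul_lid matrix_mul_rid)
  from BR have BR1: "- outer vt vt + (outer vt ut ** G) = (mat c ** outer u u + (G**G) ** outer u u) + (G ** outer v u)"
    by (simp only: add_mult_right neg_mult_l neg_mult_r matrix_mul_lid matrix_mul_rid minus_minus)
  note rw = L1 L2 L3 L4 symG
  note rw2 = outer_mult_right mult_outer_left symG
  have TLe: "- (ut$k * (G *v vt)$l) + (ut$k * (c * ut$l) + ut$k * (G *v (G *v ut))$l) = - ((G *v u)$k * v$l) - v$k * v$l" for k l
    using arg_cong[OF TL1, of "\<lambda>M. M$k$l"] by (simp add: rw) (simp add: rw2)
  have TRe: "ut$k * vt$l - ut$k * (G *v ut)$l = - ((G *v u)$k * u$l) - v$k * u$l" for k l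
    using arg_cong[OF TR1, of "\<lambda>M. M$k$l"] by (simp add: rw2)
  have BRe: "- (vt$k * vt$l) + vt$k * (G *v ut)$l = c * u$k * u$l + (G *v (G *v u))$k * u$l + (G *v v)$k * u$l" for k l
    using arg_cong[OF BR1, of "\<lambda>M. M$k$l"] by (simp add: rw) (simp add: rw2)
  have X1e: "ut$k * ((G *v vt)$l - (G *v (G *v ut))$l) = - (((G *v u)$k + v$k) * (G *v u)$l)" for k l
  proof -
    have "ut$k * (vt - G *v ut)$m = (- ((G *v u)$k + v$k)) * u$m" for m
      using TRe[of k m] by (simp add: algebra_simps)
    then have "ut$k * (G *v (vt - G *v ut))$l = (- ((G *v u)$k + v$k)) * (G *v u)$l"
      by (rule key_l)
    then show ?thesis by (simp add: matrix_vector_mult_diff_distrib algebra_simps)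
  qed
  have Y1e: "((G *v (G *v u))$k + (G *v v)$k) * u$l = - ((G *v ut)$k * (vt$l - (G *v ut)$l))" for k l
  proof -
    have "(G *v u + v)$m * u$l = ut$m * (- (vt$l - (G *v ut)$l))" for m
      using TRe[of m l] by (simp add: algebra_simps)
    then have "(G *v (G *v u + v))$k * u$l = (G *v ut)$k * (- (vt$l - (G *v ut)$l))"
      by (rule key_r)
    then show ?thesis by (simp add: matrix_vector_right_distrib algebra_simps)
  qed
  have We: "((G *v u)$k + v$k) * ((G *v u)$l + v$l) = s^2 * (ut$k * ut$l)" for k l
    using TLe[of k l] X1e[of k l] cs by algebra
  have Wte: "(vt$k - (G *v ut)$k) * (vt$l - (G *v ut)$l) = s^2 * (u$k * u$l)" for k l
    using BRe[of k l] Y1e[of k l] cs by algebra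
  have "outer (G *v u + v) (G *v u + v) = outer (s *s ut) (s *s ut)"
    using We by (simp add: vec_eq_iff power2_eq_square mult_ac)
  then have hw: "G *v u + v = s *s ut \<or> G *v u + v = - (s *s ut)" by (rule outer_sq_eq)
  have "outer (vt - G *v ut) (vt - G *v ut) = outer (s *s u) (s *s u)"
    using Wte by (simp add: vec_eq_iff power2_eq_square mult_ac)
  then have hwt: "vt - G *v ut = s *s u \<or> vt - G *v ut = - (s *s u)" by (rule outer_sq_eq)
  have TRe2: "ut$k * (vt - G *v ut)$l = - ((G *v u + v)$k * u$l)" for k l
    using TRe[of k l] by (simp add: algebra_simps)
  from hw hwt show ?thesis
  proof (elim disjE)
    assume a1: "G *v u + v = s *s ut" and a2: "vt - G *v ut = - (s *s u)"
    show ?thesis by (rule exI[of _ 1]) (simp add: a1 a2)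
  next
    assume a1: "G *v u + v = - (s *s ut)" and a2: "vt - G *v ut = s *s u"
    show ?thesis by (rule exI[of _ "-1"]) (simp add: a1 a2)
  next
    assume a1: "G *v u + v = s *s ut" and a2: "vt - G *v ut = s *s u"
    have "ut$k * u$l = 0" for k l
    proof -
      have "(2 * s) * (ut$k * u$l) = 0" using TRe2[of k l, unfolded a1 a2] by (simp add: algebra_simps)
      then show ?thesis using s0 by simp
    qed
    then have "ut = 0 \<or> u = 0" by (rule outer_zero)
    then show ?thesis
    proof
      assume z: "ut = 0" show ?thesis by (rule exI[of _ "-1"]) (use a1 a2 z in simp)
    next
      assume z: "u = 0" show ?thesis by (rule exI[of _ "1"]) (use a1 a2 z in simp)
    qed
  next
    assume a1: "G *v u + v = - (s *s ut)" and a2: "vt - G *v ut = - (s *s u)"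
    have "ut$k * u$l = 0" for k l
    proof -
      have "(2 * s) * (ut$k * u$l) = 0" using TRe2[of k l, unfolded a1 a2] by (simp add: algebra_simps)
      then show ?thesis using s0 by simp
    qed
    then have "ut = 0 \<or> u = 0" by (rule outer_zero)
    then show ?thesis
    proof
      assume z: "ut = 0" show ?thesis by (rule exI[of _ "1"]) (use a1 a2 z in simp)
    next
      assume z: "u = 0" show ?thesis by (rule exI[of _ "-1"]) (use a1 a2 z in simp)
    qed
  qed
qed


lemma mv_smult: "G *v (c *s x) = (c::complex) *s (G *v x)"
  by (simp add: vec_eq_iff matrix_vector_mult_def sum_distrib_left mult_ac)

lemma row_rev:
  fixes u v ut vt :: "complex^'r::finite" and G :: "complex^'r^'r"
  assumes symG: "transpose G = G"
    and hv: "G *v u + v = (e * s) *s ut" and hvt: "vt - G *v ut = - ((e * s) *s u)"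
    and e2: "e^2 = 1" and cs: "s^2 = - c"
  shows "blk (outer ut vt) (outer ut ut) (- outer vt vt) (- outer vt ut) ** blk (-G) (mat 1) (mat c + G**G) (-G)
          = blk (-G) (mat 1) (mat c + G**G) (-G) ** blk (outer u v) (outer u u) (- outer v v) (- outer v u)"
proof -
  have vv: "v = (e * s) *s ut - G *v u" using hv by (simp add: algebra_simps)
  have vvt: "vt = G *v ut - (e * s) *s u" using hvt by (simp add: algebra_simps)
  have cv: "v$k = e * s * ut$k - (G *v u)$k" for k using vv by simp
  have cvt: "vt$k = (G *v ut)$k - e * s * u$k" for k using vvt by simp
  have cGv: "(G *v v)$k = e * s * (G *v ut)$k - (G *v (G *v u))$k" for k
    using vv by (simp add: matrix_vector_mult_diff_distrib mv_smult)
  have cGvt: "(G *v vt)$k = (G *v (G *v ut))$k - e * s * (G *v u)$k" for k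
    using vvt by (simp add: matrix_vector_mult_diff_distrib mv_smult)
  note rw = L1 L2 L3 L4 symG
  note rw2 = outer_mult_right mult_outer_left symG
  have TL: "outer ut vt ** (-G) + outer ut ut ** (mat c + G**G) = (-G) ** outer u v + mat 1 ** (- outer v v)"
    apply (simp only: matrix_add_ldistrib neg_mult_l neg_mult_r matrix_mul_lid)
    apply (simp add: rw vec_eq_iff)
    apply (simp add: rw2)
    apply (intro allI)
    apply (simp only: cv cvt cGv cGvt)
    apply (use e2 cs in \<open>algebra | simp add: algebra_simps\<close>)
    done
  have TR: "outer ut vt ** mat 1 + outer ut ut ** (-G) = (-G) ** outer u u + mat 1 ** (- outer v u)"
    apply (simp only: neg_mult_l neg_mult_r matrix_mul_lid matrix_mul_rid)
    apply (simp add: rw vec_eq_iff)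
    apply (simp add: rw2)
    apply (intro allI)
    apply (simp only: cv cvt cGv cGvt)
    apply (use e2 cs in \<open>algebra | simp add: algebra_simps\<close>)
    done
  have BR: "(- outer vt vt) ** mat 1 + (- outer vt ut) ** (-G) = (mat c + G**G) ** outer u u + (-G) ** (- outer v u)"
    apply (simp only: add_mult_right neg_mult_l neg_mult_r matrix_mul_lid matrix_mul_rid minus_minus)
    apply (simp add: rw vec_eq_iff)
    apply (simp add: rw2)
    apply (intro allI)
    apply (simp only: cv cvt cGv cGvt)
    apply (use e2 cs in \<open>algebra | simp add: algebra_simps\<close>)
    done
  have BL: "(- outer vt vt) ** (-G) + (- outer vt ut) ** (mat c + G**G) = (mat c + G**G) ** outer u v + (-G) ** (- outer v v)"
    apply (simp only: add_mult_right matrix_add_ldistrib neg_mult_l neg_mult_r matrix_mul_lid matrix_mul_rid minus_minus)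
    apply (simp add: rw vec_eq_iff)
    apply (simp add: rw2)
    apply (intro allI)
    apply (simp only: cv cvt cGv cGvt)
    apply (use e2 cs in \<open>algebra | simp add: algebra_simps\<close>)
    done
  show ?thesis unfolding blk_mult blk_eq using TL TR BR BL by simp
qed


lemma Mmat_shift: "Mmat \<Gamma> z lams = Mmat \<Gamma> w lams + sm (z - w) JJ"
  by (simp add: vec_eq_iff Mmat_entry sm_def algebra_simps)

lemma sm_sm: "sm c (sm d Z) = sm (c * d) Z"
  by (simp add: vec_eq_iff sm_def mult_ac)

lemma sm_one: "sm 1 Z = Z"
  by (simp add: vec_eq_iff sm_def)

lemma tr_add: "transpose (A + B) = transpose A + transpose (B::complex^_^_)"
  by (simp add: vec_eq_iff transpose_def)
lemma tr_neg: "transpose (- A) = - transpose (A::complex^_^_)"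
  by (simp add: vec_eq_iff transpose_def)
lemma tr_diff: "transpose (A - B) = transpose A - transpose (B::complex^_^_)"
  by (simp add: vec_eq_iff transpose_def)
lemma tr_diagm: "transpose (diagm d) = diagm d"
  by (simp add: vec_eq_iff transpose_def diagm_def)
lemma sub_ldistrib: "(A::complex^_^_) ** (B - C) = A ** B - A ** C"
  by (simp add: vec_eq_iff matrix_matrix_mult_def sum_subtractf right_diff_distrib)
lemma sub_rdistrib: "(A - B) ** (C::complex^_^_) = A ** C - B ** C"
  by (simp add: vec_eq_iff matrix_matrix_mult_def sum_subtractf left_diff_distrib)

lemma const_term:
  fixes X P Xt Pt :: "complex^'r::finite^'n::finite"
  assumes X1: "transpose X ** X = mat 1" and Xt1: "transpose Xt ** Xt = mat 1"
    and C: "transpose Pt ** Xt + transpose X ** P = 0"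
  shows "(\<Sum>i\<in>UNIV. NN Xt Pt i ** JJ - JJ ** NN X P i) + (JJ ** Mmat \<Gamma> z lams - Mmat \<Gamma> z lams ** JJ) = 0"
proof -
  have f1: "(\<Sum>i\<in>UNIV. Xt$i$k * Xt$i$l) = (if k = l then 1 else 0)" for k l
    using arg_cong[OF Xt1, of "\<lambda>M. M$k$l"] by (simp add: matrix_matrix_mult_def transpose_def mat_def)
  have f2: "(\<Sum>i\<in>UNIV. X$i$k * X$i$l) = (if k = l then 1 else 0)" for k l
    using arg_cong[OF X1, of "\<lambda>M. M$k$l"] by (simp add: matrix_matrix_mult_def transpose_def mat_def)
  have f3: "(\<Sum>i\<in>UNIV. Pt$i$k * Xt$i$l) + (\<Sum>i\<in>UNIV. X$i$k * P$i$l) = 0" for k l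
    using arg_cong[OF C, of "\<lambda>M. M$k$l"] by (simp add: matrix_matrix_mult_def transpose_def)
  have e1: "NN Xt Pt i ** JJ = blk (outer (Xt$i) (Xt$i)) 0 (- outer (Pt$i) (Xt$i)) 0" for i
    unfolding NN_def JJ_def blk_mult by (simp add: neg_mult_l)
  have e2: "JJ ** NN X P i = blk 0 0 (outer (X$i) (P$i)) (outer (X$i) (X$i))" for i
    unfolding NN_def JJ_def blk_mult by simp
  have e3: "JJ ** Mmat \<Gamma> z lams - Mmat \<Gamma> z lams ** JJ = blk (- mat 1) 0 0 (mat 1)"
    unfolding Mmat_def JJ_def blk_mult blk_diff by simp
  show ?thesis
  proof -
    have "((\<Sum>i\<in>UNIV. NN Xt Pt i ** JJ - JJ ** NN X P i) + (JJ ** Mmat \<Gamma> z lams - Mmat \<Gamma> z lams ** JJ)) $ p $ q = 0" for p q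
      unfolding e1 e2 e3
      by (cases p; cases q) (simp_all add: f1 f2 sum_subtractf sum_negf mat_def f3[simplified add_eq_0_iff2])
    then show ?thesis by (simp add: vec_eq_iff)
  qed
qed


lemma forward:
  fixes a :: "'n::finite \<Rightarrow> complex" and X P Xt Pt :: "complex^'r::finite^'n"
  assumes symG: "transpose \<Gamma> = \<Gamma>"
    and X1: "transpose X ** X = mat 1" and Xt1: "transpose Xt ** Xt = mat 1"
    and C: "transpose Pt ** Xt + transpose X ** P = 0"
    and rows: "\<And>i. \<Gamma> *v (X$i) + P$i = s i *s (Xt$i) \<and> Pt$i - \<Gamma> *v (Xt$i) = - (s i *s (X$i))"
    and sqrt: "\<And>i. (s i)^2 = lams - a i"
    and lam: "lam \<notin> range a"
  shows "Lax a Xt Pt lam ** Mmat \<Gamma> lam lams = Mmat \<Gamma> lam lams ** Lax a X P lam"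
proof -
  have K0: "NN Xt Pt i ** Mmat \<Gamma> (a i) lams = Mmat \<Gamma> (a i) lams ** NN X P i" for i
    unfolding NN_def Mmat_def
    by (rule row_rev[where e = 1 and s = "s i"]) (use symG rows[of i] sqrt[of i] in simp_all)
  have Kz: "NN Xt Pt i ** Mmat \<Gamma> lam lams - Mmat \<Gamma> lam lams ** NN X P i
      = sm (lam - a i) (NN Xt Pt i ** JJ - JJ ** NN X P i)" for i
    unfolding Mmat_shift[of \<Gamma> lam lams "a i"] matrix_add_ldistrib add_mult_right sm_mult_left sm_mult_right K0
    by (simp add: sm_diff[symmetric])
  have q: "sm (1 / (lam - a i)) (sm (lam - a i) Z) = Z" for i Z
    using lam by (auto simp: sm_sm sm_one)
  have "Lax a Xt Pt lam ** Mmat \<Gamma> lam lams - Mmat \<Gamma> lam lams ** Lax a X P lam = 0"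
    unfolding diff_decomp[OF lam] Kz q by (rule const_term[OF X1 Xt1 C])
  then show ?thesis by simp
qed


lemma rowXG:
  fixes \<Gamma> :: "complex^'r^'r"
  assumes "transpose \<Gamma> = \<Gamma>"
  shows "(X ** \<Gamma>)$i$l = (\<Gamma> *v (X$i))$l"
proof -
  have g: "\<Gamma>$k$l = \<Gamma>$l$k" for k
    using arg_cong[OF assms, of "\<lambda>M. M$l$k"] by (simp add: transpose_def)
  have "(X ** \<Gamma>)$i$l = (\<Sum>k\<in>UNIV. X$i$k * \<Gamma>$k$l)" by (simp add: matrix_matrix_mult_def)
  also have "\<dots> = (\<Sum>k\<in>UNIV. \<Gamma>$l$k * X$i$k)" using g by (simp add: mult.commute[of "X$i$_"])
  also have "\<dots> = (\<Gamma> *v (X$i))$l" by (simp add: matrix_vector_mult_def)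
  finally show ?thesis .
qed

lemma diagm_nth: "(diagm d ** Y)$i$l = d i * Y$i$l"
  unfolding matrix_matrix_mult_def diagm_def by (simp add: diag_sum)

theorem theorem6p2:
  fixes a :: "'n::finite \<Rightarrow> complex"
    and s :: "'n \<Rightarrow> complex"
    and lams :: complex
    and X P Xt Pt :: "complex^'r::finite^'n"
    and \<Gamma> :: "complex^'r^'r"
  assumes distinct: "inj a"
    and lam_notin: "lams \<notin> range a"
    and sqrt: "\<And>i. (s i)\<^sup>2 = lams - a i"
    and XP: "in_TVnr X P" and XPt: "in_TVnr Xt Pt"
    and symm: "transpose \<Gamma> = \<Gamma>"
  shows "(neumann s X P Xt Pt \<Gamma> \<longrightarrow>
            (\<forall>lam. lam \<notin> range a \<longrightarrow> Lax a Xt Pt lam ** Mmat \<Gamma> lam lams = Mmat \<Gamma> lam lams ** Lax a X P lam))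
       \<and> ((\<forall>lam. lam \<notin> range a \<longrightarrow> Lax a Xt Pt lam ** Mmat \<Gamma> lam lams = Mmat \<Gamma> lam lams ** Lax a X P lam)
            \<longrightarrow> (\<exists>\<epsilon> :: 'n \<Rightarrow> complex. (\<forall>i. \<epsilon> i = 1 \<or> \<epsilon> i = -1) \<and>
                   neumann s X P (diagm \<epsilon> ** Xt) (diagm \<epsilon> ** Pt) \<Gamma>))"
proof (intro conjI impI allI)
  have X1: "transpose X ** X = mat 1" and XP0: "transpose X ** P + transpose P ** X = 0"
    using XP by (auto simp: in_TVnr_def)
  have Xt1: "transpose Xt ** Xt = mat 1" using XPt by (auto simp: in_TVnr_def)
  {
    fix lam assume N: "neumann s X P Xt Pt \<Gamma>" and lam: "lam \<notin> range a"
    have eP: "P = diagm s ** Xt - X ** \<Gamma>" and ePt: "Pt = - (diagm s ** X) + Xt ** \<Gamma>"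
      using N by (auto simp: neumann_def)
    have rows: "\<Gamma> *v (X$i) + P$i = s i *s (Xt$i) \<and> Pt$i - \<Gamma> *v (Xt$i) = - (s i *s (X$i))" for i
    proof -
      have "P$i$l = s i * Xt$i$l - (\<Gamma> *v (X$i))$l" for l
        using arg_cong[OF eP, of "\<lambda>M. M$i$l"] by (simp add: diagm_nth rowXG[OF symm])
      moreover have "Pt$i$l = - (s i * X$i$l) + (\<Gamma> *v (Xt$i))$l" for l
        using arg_cong[OF ePt, of "\<lambda>M. M$i$l"] by (simp add: diagm_nth rowXG[OF symm])
      ultimately show ?thesis by (simp add: vec_eq_iff)
    qed
    have t1: "transpose Pt ** Xt = - (transpose X ** diagm s ** Xt) + \<Gamma>"
      unfolding ePt tr_add tr_neg matrix_transpose_mul tr_diagm symm add_mult_right neg_mult_l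
      by (simp add: Xt1 flip: matrix_mul_assoc)
    have t2: "transpose X ** P = transpose X ** diagm s ** Xt - \<Gamma>"
      unfolding eP sub_ldistrib by (simp add: X1 matrix_mul_assoc)
    have C: "transpose Pt ** Xt + transpose X ** P = 0" unfolding t1 t2 by simp
    show "Lax a Xt Pt lam ** Mmat \<Gamma> lam lams = Mmat \<Gamma> lam lams ** Lax a X P lam"
      by (rule forward[OF symm X1 Xt1 C rows sqrt lam])
  }
  assume H: "\<forall>lam. lam \<notin> range a \<longrightarrow> Lax a Xt Pt lam ** Mmat \<Gamma> lam lams = Mmat \<Gamma> lam lams ** Lax a X P lam"
  define R where "R i e \<longleftrightarrow> (e = 1 \<or> e = -1) \<and> \<Gamma> *v (X$i) + P$i = (e * s i) *s (Xt$i) \<and> Pt$i - \<Gamma> *v (Xt$i) = - ((e * s i) *s (X$i))" for i e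
  have ex: "\<exists>e. R i e" for i
    unfolding R_def
  proof (rule row_lemma[OF symm, where c = "a i - lams"])
    show "blk (outer (Xt$i) (Pt$i)) (outer (Xt$i) (Xt$i)) (- outer (Pt$i) (Pt$i)) (- outer (Pt$i) (Xt$i)) ** blk (-\<Gamma>) (mat 1) (mat (a i - lams) + \<Gamma>**\<Gamma>) (-\<Gamma>)
          = blk (-\<Gamma>) (mat 1) (mat (a i - lams) + \<Gamma>**\<Gamma>) (-\<Gamma>) ** blk (outer (X$i) (P$i)) (outer (X$i) (X$i)) (- outer (P$i) (P$i)) (- outer (P$i) (X$i))"
      using resid[OF distinct H, of i] unfolding NN_def Mmat_def .
    show "(s i)^2 = - (a i - lams)" using sqrt[of i] by simp
    show "s i \<noteq> 0" using sqrt[of i] lam_notin by auto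
  qed
  obtain \<epsilon> where "\<forall>i. R i (\<epsilon> i)" using choice[of R] ex by blast
  then have ep: "(\<epsilon> i = 1 \<or> \<epsilon> i = -1) \<and> \<Gamma> *v (X$i) + P$i = (\<epsilon> i * s i) *s (Xt$i) \<and> Pt$i - \<Gamma> *v (Xt$i) = - ((\<epsilon> i * s i) *s (X$i))" for i
    unfolding R_def by blast
  have e2: "\<epsilon> i * \<epsilon> i = 1" for i
  proof -
    have "\<epsilon> i = 1 \<or> \<epsilon> i = -1" using ep[of i] by blast
    then show ?thesis by auto
  qed
  define Y where "Y = diagm \<epsilon> ** Xt"
  have eq1: "P = diagm s ** Y - X ** \<Gamma>"
  proof -
    have "P$i$l = (diagm s ** Y - X ** \<Gamma>)$i$l" for i l
    proof -
      have "(\<Gamma> *v (X$i))$l + P$i$l = \<epsilon> i * s i * Xt$i$l"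
        using arg_cong[OF conjunct1[OF conjunct2[OF ep[of i]]], of "\<lambda>v. v$l"] by simp
      then show ?thesis by (simp add: Y_def diagm_nth rowXG[OF symm] algebra_simps)
    qed
    then show ?thesis by (simp add: vec_eq_iff)
  qed
  have eq2: "diagm \<epsilon> ** Pt = - (diagm s ** X) + Y ** \<Gamma>"
  proof -
    have "(diagm \<epsilon> ** Pt)$i$l = (- (diagm s ** X) + Y ** \<Gamma>)$i$l" for i l
    proof -
      have h: "Pt$i$l - (\<Gamma> *v (Xt$i))$l = - (\<epsilon> i * s i * X$i$l)"
        using arg_cong[OF conjunct2[OF conjunct2[OF ep[of i]]], of "\<lambda>v. v$l"] by simp
      have "(Y ** \<Gamma>)$i$l = \<epsilon> i * (\<Gamma> *v (Xt$i))$l"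
        unfolding Y_def matrix_mul_assoc[symmetric] by (simp add: diagm_nth rowXG[OF symm])
      then show ?thesis using h e2[of i] by (simp add: diagm_nth) algebra
    qed
    then show ?thesis by (simp add: vec_eq_iff)
  qed
  have eq3: "\<Gamma> = mat (1/2 :: complex) ** (transpose Y ** diagm s ** X + transpose X ** diagm s ** Y)"
  proof -
    have t1: "transpose X ** P = transpose X ** diagm s ** Y - \<Gamma>"
      unfolding eq1 sub_ldistrib by (simp add: X1 matrix_mul_assoc)
    have t2: "transpose P ** X = transpose Y ** diagm s ** X - \<Gamma>"
      unfolding eq1 tr_diff matrix_transpose_mul tr_diagm symm sub_rdistrib
      by (simp add: X1 flip: matrix_mul_assoc)
    have "transpose Y ** diagm s ** X + transpose X ** diagm s ** Y = \<Gamma> + \<Gamma>"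
      using XP0 unfolding t1 t2 by (simp add: algebra_simps)
    then show ?thesis by (simp add: mult_mat_l vec_eq_iff)
  qed
  show "\<exists>\<epsilon> :: 'n \<Rightarrow> complex. (\<forall>i. \<epsilon> i = 1 \<or> \<epsilon> i = -1) \<and>
                   neumann s X P (diagm \<epsilon> ** Xt) (diagm \<epsilon> ** Pt) \<Gamma>"
  proof (rule exI[of _ \<epsilon>], rule conjI)
    show "\<forall>i. \<epsilon> i = 1 \<or> \<epsilon> i = -1" using ep by blast
    show "neumann s X P (diagm \<epsilon> ** Xt) (diagm \<epsilon> ** Pt) \<Gamma>"
      unfolding neumann_def Y_def[symmetric] using eq1 eq2 eq3 by blast
  qed
qed

end
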